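(* Let $s\geq 1$ and $n\geq 2s$ be integers, and let $G^*=K_1\vee(K_{n-2}\cup K_1)$. (i) If $n\geq 2s+2$, then $\lambda_1(D(G^* ))\le \lambda_1(D(K_s\vee(K_{n-2s}\cup sK_1)))$, with equality if and only if $s=1$. (ii) If $n=2s+1$, then $\lambda_1(D(G^* ))\le \lambda_1(D(S_{n,\frac{n-1}{2}}))$, with equality if and only if $n=3$. (iii) If $n=2s$ and $n\geq 10$, then $\lambda_1(D(G^* ))<\lambda_1(D(S_{n,\frac{n}{2}}))$. (iv) If $n=2s$ and $2\le n\le 8$, then $\lambda_1(D(S_{n,\frac{n}{2}}))\le \lambda_1(D(G^* ))$, with equality if and only if $n=2$.
   Context: All graphs are finite, simple, undirected. For a connected graph $G$, $D(G)$ is its distance matrix (entry $(i,j)$ is the distance between $v_i$ and $v_j$) and $\lambda_1(D(G))$ its largest eigenvalue. $G\cup H$ is disjoint union, $G\vee H$ the join (disjoint union plus all edges between the two vertex sets), $tK_1$ the edgeless graph on $t$ vertices, $K_0$ the empty graph, and $S_{n,k}=K_k\vee(n-k)K_1$. *)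

theory Defs
  imports "Jordan_Normal_Form.Char_Poly"
begin

text \<open>A finite simple graph on the vertex set {0..<n}, given by its order n and a
 (symmetric, irreflexive) adjacency predicate, only meaningful on vertices below n.\<close>
type_synonym graph = "nat \<times> (nat \<Rightarrow> nat \<Rightarrow> bool)"

definition order :: "graph \<Rightarrow> nat" where "order G = fst G"
definition adj :: "graph \<Rightarrow> nat \<Rightarrow> nat \<Rightarrow> bool" where
  "adj G i j = (i < fst G \<and> j < fst G \<and> snd G i j)"

definition complete :: "nat \<Rightarrow> graph" where
  "complete k = (k, \<lambda>i j. i \<noteq> j)"

definition edgeless :: "nat \<Rightarrow> graph" where
  "edgeless t = (t, \<lambda>i j. False)"

definition gunion :: "graph \<Rightarrow> graph \<Rightarrow> graph" where
  "gunion G H = (order G + order H,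
     \<lambda>i j. (i < order G \<and> j < order G \<and> adj G i j) \<or>
           (order G \<le> i \<and> order G \<le> j \<and> adj H (i - order G) (j - order G)))"

definition gjoin :: "graph \<Rightarrow> graph \<Rightarrow> graph" where
  "gjoin G H = (order G + order H,
     \<lambda>i j. snd (gunion G H) i j \<or>
           (i < order G \<and> order G \<le> j \<and> j < order G + order H) \<or>
           (j < order G \<and> order G \<le> i \<and> i < order G + order H))"

fun walk :: "graph \<Rightarrow> nat \<Rightarrow> nat \<Rightarrow> nat \<Rightarrow> bool" where
  "walk G 0 i j = (i = j \<and> i < order G)"
| "walk G (Suc k) i j = (\<exists>m. adj G i m \<and> walk G k m j)"

text \<open>graph distance (length of a shortest walk); used only for connected graphs\<close>
definition gdist :: "graph \<Rightarrow> nat \<Rightarrow> nat \<Rightarrow> nat" where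
  "gdist G i j = (LEAST k. walk G k i j)"

definition connected_graph :: "graph \<Rightarrow> bool" where
  "connected_graph G = (\<forall>i<order G. \<forall>j<order G. \<exists>k. walk G k i j)"

definition dist_matrix :: "graph \<Rightarrow> real mat" where
  "dist_matrix G = mat (order G) (order G) (\<lambda>(i,j). real (gdist G i j))"

text \<open>largest eigenvalue \<lambda>_1 of a real matrix (all eigenvalues of D(G) are real)\<close>
definition lambda1 :: "real mat \<Rightarrow> real" where
  "lambda1 A = Max {k. eigenvalue A k}"

definition Gstar :: "nat \<Rightarrow> graph" where
  "Gstar n = gjoin (complete 1) (gunion (complete (n - 2)) (complete 1))"

definition S :: "nat \<Rightarrow> nat \<Rightarrow> graph" where
  "S n k = gjoin (complete k) (edgeless (n - k))"

end

theory Submission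
  imports Defs
begin


lemma eig_finite:
  assumes A: "(A :: real mat) \<in> carrier_mat n n"
  shows "finite {k. eigenvalue A k}"
proof -
  have "char_poly A \<noteq> 0" using degree_monic_char_poly[OF A] by auto
  then have "finite {k. poly (char_poly A) k = 0}" by (rule poly_roots_finite)
  then show ?thesis using eigenvalue_root_char_poly[OF A] by simp
qed

lemma le_lambda1:
  assumes A: "(A :: real mat) \<in> carrier_mat n n" and "eigenvalue A k"
  shows "k \<le> lambda1 A"
  unfolding lambda1_def using eig_finite[OF A] assms(2) by (intro Max_ge) auto

lemma mulv_nth: "A \<in> carrier_mat n n \<Longrightarrow> v \<in> carrier_vec n \<Longrightarrow> i < n \<Longrightarrow>
   (A *\<^sub>v v) $ i = (\<Sum>j<n. A $$ (i,j) * v $ j)"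
  by (auto simp: scalar_prod_def lessThan_atLeast0 intro!: sum.cong)

lemma cw_upper:
  fixes A :: "real mat"
  assumes A: "A \<in> carrier_mat n n" and nn: "\<And>i j. i<n \<Longrightarrow> j<n \<Longrightarrow> A $$ (i,j) \<ge> 0"
    and x: "x \<in> carrier_vec n" and xp: "\<And>i. i<n \<Longrightarrow> x $ i > 0"
    and Ax: "\<And>i. i<n \<Longrightarrow> (A *\<^sub>v x) $ i \<le> c * x $ i"
    and ev: "eigenvalue A k"
  shows "k \<le> c"
proof -
  from ev obtain v where v: "v \<in> carrier_vec n" "v \<noteq> 0\<^sub>v n" "A *\<^sub>v v = k \<cdot>\<^sub>v v"
    using A unfolding eigenvalue_def eigenvector_def by auto
  define r where "r j = \<bar>v $ j\<bar> / x $ j" for j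
  have ne: "{..<n} \<noteq> {}" using v by (auto simp: vec_eq_iff)
  define t where "t = Max (r ` {..<n})"
  have "t \<in> r ` {..<n}" unfolding t_def using ne by (intro Max_in) auto
  then obtain i where i: "i < n" "r i = t" by auto
  have rt: "r j \<le> t" if "j < n" for j unfolding t_def using that by (intro Max_ge) auto
  obtain j0 where j0: "j0 < n" "v $ j0 \<noteq> 0" using v by (auto simp: vec_eq_iff)
  have "r j0 > 0" using xp[OF j0(1)] j0 unfolding r_def by auto
  then have tpos: "t > 0" using rt[OF j0(1)] by linarith
  have vj: "\<bar>v $ j\<bar> \<le> t * x $ j" if "j < n" for j
    using rt[OF that] xp[OF that] unfolding r_def by (simp add: divide_le_eq)
  have vi: "\<bar>v $ i\<bar> = t * x $ i" using i xp[OF i(1)] unfolding r_def by auto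
  have "\<bar>k\<bar> * \<bar>v $ i\<bar> = \<bar>(A *\<^sub>v v) $ i\<bar>" using v i by (simp add: abs_mult)
  also have "\<dots> = \<bar>\<Sum>j<n. A $$ (i,j) * v $ j\<bar>" using mulv_nth[OF A v(1) i(1)] by simp
  also have "\<dots> \<le> (\<Sum>j<n. A $$ (i,j) * \<bar>v $ j\<bar>)"
    by (rule order_trans[OF sum_abs]) (auto simp: abs_mult nn i)
  also have "\<dots> \<le> (\<Sum>j<n. A $$ (i,j) * (t * x $ j))"
    by (intro sum_mono mult_left_mono) (auto simp: vj nn i)
  also have "\<dots> = t * (A *\<^sub>v x) $ i" using mulv_nth[OF A x i(1)]
    by (simp add: sum_distrib_left algebra_simps)
  also have "\<dots> \<le> t * (c * x $ i)" using Ax[OF i(1)] tpos by simp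
  finally have "\<bar>k\<bar> * (t * x $ i) \<le> c * (t * x $ i)" using vi by (simp add: algebra_simps)
  then have "\<bar>k\<bar> \<le> c" using tpos xp[OF i(1)] by (simp add: mult_le_cancel_right)
  then show ?thesis by simp
qed

lemma perron_lambda1:
  fixes A :: "real mat"
  assumes A: "A \<in> carrier_mat n n" and nn: "\<And>i j. i<n \<Longrightarrow> j<n \<Longrightarrow> A $$ (i,j) \<ge> 0"
    and x: "x \<in> carrier_vec n" and xp: "\<And>i. i<n \<Longrightarrow> x $ i > 0" and n: "n > 0"
    and Ax: "A *\<^sub>v x = \<mu> \<cdot>\<^sub>v x"
  shows "lambda1 A = \<mu>"
proof -
  have ev: "eigenvalue A \<mu>" unfolding eigenvalue_def eigenvector_def
    using A x Ax xp[OF n] n by (intro exI[of _ x]) (auto simp: vec_eq_iff)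
  have "\<forall>k\<in>{k. eigenvalue A k}. k \<le> \<mu>"
    using cw_upper[OF A nn x xp] Ax x by auto
  then show ?thesis unfolding lambda1_def using eig_finite[OF A] ev
    by (intro Max_eqI) auto
qed



definition hadj :: "nat \<Rightarrow> nat \<Rightarrow> nat \<Rightarrow> nat \<Rightarrow> bool" where
  "hadj s t i j = (i < s \<or> j < s \<or> (i < s + t \<and> j < s + t))"

definition Dm :: "nat \<Rightarrow> nat \<Rightarrow> real mat" where
  "Dm s t = mat (2*s+t) (2*s+t) (\<lambda>(i,j). if i = j then 0 else if hadj s t i j then 1 else 2)"

lemma walk1: "walk G (Suc 0) i j \<longleftrightarrow> adj G i j \<and> j < order G"
  by auto

lemma walk2: "walk G (Suc (Suc 0)) i j \<longleftrightarrow> (\<exists>m. adj G i m \<and> adj G m j \<and> j < order G)"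
  by auto

lemma dist_matrix_H:
  assumes o: "order G = 2*s+t" and s: "s \<ge> 1"
    and a: "\<And>i j. adj G i j \<longleftrightarrow> (i < 2*s+t \<and> j < 2*s+t \<and> i \<noteq> j \<and> hadj s t i j)"
  shows "dist_matrix G = Dm s t"
proof -
  have "gdist G i j = (if i = j then 0 else if hadj s t i j then 1 else 2)"
    if ij: "i < 2*s+t" "j < 2*s+t" for i j
  proof (cases "i = j")
    case True
    then show ?thesis unfolding gdist_def using ij o by (intro Least_equality) auto
  next
    case ne: False
    have w0: "\<not> walk G 0 i j" using ne by simp
    show ?thesis
    proof (cases "hadj s t i j")
      case True
      have w: "walk G 1 i j" using walk1[of G i j] a[of i j] ij ne True o by simp
      have "gdist G i j = 1" unfolding gdist_def
      proof (rule Least_equality)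
        show "walk G 1 i j" by (fact w)
        fix y assume "walk G y i j" then show "1 \<le> y" using w0 by (cases y) auto
      qed
      then show ?thesis using ne True by simp
    next
      case False
      have w1: "\<not> walk G 1 i j" using walk1[of G i j] a[of i j] False by simp
      have "i \<noteq> 0" "j \<noteq> 0" using False s unfolding hadj_def by auto
      then have w: "walk G 2 i j" using walk2[of G i j] a ij o s unfolding hadj_def
        by (auto simp: numeral_2_eq_2 intro!: exI[of _ 0])
      have "gdist G i j = 2" unfolding gdist_def
      proof (rule Least_equality)
        show "walk G 2 i j" by (fact w)
        fix y assume "walk G y i j" then show "2 \<le> y" using w0 w1
          by (cases y; cases "y - 1") auto
      qed
      then show ?thesis using ne False by simp
    qed
  qed
  then show ?thesis unfolding dist_matrix_def Dm_def o by (intro eq_matI) auto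
qed


lemma adj_gjoin_gunion:
  "adj (gjoin (complete s) (gunion (complete t) (edgeless u))) i j \<longleftrightarrow>
     (i < s+(t+u) \<and> j < s+(t+u) \<and> i \<noteq> j \<and> (i < s \<or> j < s \<or> (i < s + t \<and> j < s + t)))"
  unfolding adj_def gjoin_def gunion_def order_def complete_def edgeless_def by (simp; cases "i<s"; cases "j<s"; force simp: less_diff_conv2 not_less)

lemma order_gjoin_gunion:
  "order (gjoin (complete s) (gunion (complete t) (edgeless u))) = s + (t + u)"
  unfolding gjoin_def gunion_def order_def complete_def edgeless_def by simp

lemma dm_H: "s \<ge> 1 \<Longrightarrow> dist_matrix (gjoin (complete s) (gunion (complete t) (edgeless s))) = Dm s t"
  by (rule dist_matrix_H) (auto simp: adj_gjoin_gunion order_gjoin_gunion hadj_def)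
lemma adj_Gstar: "n \<ge> 2 \<Longrightarrow> adj (Gstar n) i j \<longleftrightarrow>
     (i < 2*1+(n-2) \<and> j < 2*1+(n-2) \<and> i \<noteq> j \<and> hadj 1 (n-2) i j)"
  unfolding Gstar_def adj_def gjoin_def gunion_def order_def complete_def hadj_def
  by (simp; cases "i<1"; cases "j<1"; force simp: less_diff_conv2 not_less)

lemma order_Gstar: "n \<ge> 2 \<Longrightarrow> order (Gstar n) = 2*1+(n-2)"
  unfolding Gstar_def gjoin_def gunion_def order_def complete_def by simp

lemma dm_Gstar: "n \<ge> 2 \<Longrightarrow> dist_matrix (Gstar n) = Dm 1 (n-2)"
  by (rule dist_matrix_H) (auto simp: adj_Gstar order_Gstar)

lemma adj_S: "k \<le> n \<Longrightarrow> adj (S n k) i j \<longleftrightarrow> (i < n \<and> j < n \<and> i \<noteq> j \<and> (i < k \<or> j < k))"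
  unfolding S_def adj_def gjoin_def gunion_def order_def complete_def edgeless_def
  by (simp; cases "i<k"; cases "j<k"; force simp: less_diff_conv2 not_less)

lemma order_S: "k \<le> n \<Longrightarrow> order (S n k) = n"
  unfolding S_def gjoin_def gunion_def order_def complete_def edgeless_def by simp

lemma dm_S1: "s \<ge> 1 \<Longrightarrow> dist_matrix (S (2*s+1) s) = Dm s 1"
  by (rule dist_matrix_H) (auto simp: adj_S order_S hadj_def)

lemma dm_S0: "s \<ge> 1 \<Longrightarrow> dist_matrix (S (2*s) s) = Dm s 0"
  by (rule dist_matrix_H) (auto simp: adj_S order_S hadj_def)



definition lv :: "nat \<Rightarrow> nat \<Rightarrow> real \<Rightarrow> real \<Rightarrow> real \<Rightarrow> real vec" where
  "lv s t x y z = vec (2*s+t) (\<lambda>i. if i < s then x else if i < s+t then y else z)"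

lemma sum_ifeq:
  fixes c :: real
  shows "(\<Sum>j\<in>{a..<b}. if j = i then 0 else c) =
     (if a \<le> i \<and> i < b then (real (b-a) - 1) * c else real (b-a) * c)"
proof -
  have "(\<Sum>j\<in>{a..<b}. if j = i then 0 else c) = (\<Sum>j\<in>{a..<b}. c - (if j = i then c else 0))"
    by (intro sum.cong) auto
  also have "\<dots> = real (b-a) * c - (if a \<le> i \<and> i < b then c else 0)"
    by (simp add: sum_subtractf)
  finally show ?thesis by (auto simp: algebra_simps)
qed

lemma Dm_carrier: "Dm s t \<in> carrier_mat (2*s+t) (2*s+t)" by (simp add: Dm_def)
lemma lv_carrier: "lv s t x y z \<in> carrier_vec (2*s+t)" by (simp add: lv_def)

lemma Dm_mult:
  assumes i: "i < 2*s+t"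
  shows "(Dm s t *\<^sub>v lv s t x y z) $ i =
    (if i < s then (real s - 1)*x + real t*y + real s*z
     else if i < s+t then real s*x + (real t - 1)*y + 2*real s*z
     else real s * x + 2*real t*y + 2*(real s - 1)*z)"
proof -
  define N where "N = 2*s+t"
  define f where "f j = Dm s t $$ (i,j) * lv s t x y z $ j" for j
  have "(Dm s t *\<^sub>v lv s t x y z) $ i = (\<Sum>j<N. f j)"
    unfolding f_def N_def by (rule mulv_nth[OF Dm_carrier lv_carrier i])
  also have "\<dots> = (\<Sum>j\<in>{0..<s}. f j) + (\<Sum>j\<in>{s..<s+t}. f j) + (\<Sum>j\<in>{s+t..<N}. f j)"
    unfolding N_def lessThan_atLeast0 by (simp add: sum.atLeastLessThan_concat)
  also have "\<dots> = (if i < s then (real s - 1)*x + real t*y + real s*z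
     else if i < s+t then real s*x + (real t - 1)*y + 2*real s*z
     else real s * x + 2*real t*y + 2*(real s - 1)*z)"
  proof -
    have fj: "f j = (if j = i then 0 else (if hadj s t i j then 1 else 2) *
        (if j < s then x else if j < s+t then y else z))" if "j < N" for j
      using that i unfolding f_def Dm_def lv_def N_def by auto
    have b1: "(\<Sum>j\<in>{0..<s}. f j) = (\<Sum>j\<in>{0..<s}. if j = i then 0 else x)"
      by (intro sum.cong) (auto simp: fj N_def hadj_def)
    have b2: "(\<Sum>j\<in>{s..<s+t}. f j) = (\<Sum>j\<in>{s..<s+t}. if j = i then 0 else (if i < s+t then 1 else 2) * y)"
      by (intro sum.cong) (auto simp: fj N_def hadj_def)
    have b3: "(\<Sum>j\<in>{s+t..<N}. f j) = (\<Sum>j\<in>{s+t..<N}. if j = i then 0 else (if i < s then 1 else 2) * z)"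
      by (intro sum.cong) (auto simp: fj N_def hadj_def)
    show ?thesis unfolding b1 b2 b3 sum_ifeq using i unfolding N_def
      by (auto simp: algebra_simps of_nat_diff)
  qed
  finally show ?thesis .
qed

lemma Dm_eig:
  assumes ex: "s > 0 \<Longrightarrow> \<nu> * x = (real s - 1)*x + real t*y + real s*z"
    and ey: "t > 0 \<Longrightarrow> \<nu> * y = real s*x + (real t - 1)*y + 2*real s*z"
    and ez: "s > 0 \<Longrightarrow> \<nu> * z = real s * x + 2*real t*y + 2*(real s - 1)*z"
  shows "Dm s t *\<^sub>v lv s t x y z = \<nu> \<cdot>\<^sub>v lv s t x y z"
proof (rule eq_vecI)
  fix i assume "i < dim_vec (\<nu> \<cdot>\<^sub>v lv s t x y z)"
  then have i: "i < 2*s+t" by (simp add: lv_def)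
  show "(Dm s t *\<^sub>v lv s t x y z) $ i = (\<nu> \<cdot>\<^sub>v lv s t x y z) $ i"
    unfolding Dm_mult[OF i] using i ex ey ez by (auto simp: lv_def)
qed (simp add: lv_def Dm_def)

lemma Dm_nonneg: "i < 2*s+t \<Longrightarrow> j < 2*s+t \<Longrightarrow> Dm s t $$ (i,j) \<ge> 0"
  by (simp add: Dm_def)



definition fG :: "real \<Rightarrow> real \<Rightarrow> real" where
  "fG n m = m^3 - (n-3)*m^2 - (5*n-9)*m - 3*n + 5"
definition gH :: "real \<Rightarrow> real \<Rightarrow> real \<Rightarrow> real" where
  "gH s t m = (m-s+1)*(m-t+1)*(m-2*s+2) - 4*s*t*(m-s+1) - s*t*(m-2*s+2) - 4*s^2*t - s^2*(m-t+1)"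
definition qS :: "real \<Rightarrow> real \<Rightarrow> real" where
  "qS s m = (m-s+1)*(m-2*s+2) - s^2"

lemma root_between:
  fixes f :: "real \<Rightarrow> real"
  assumes "a \<le> b" "f a \<le> 0" "0 \<le> f b" "continuous_on {a..b} f"
  shows "\<exists>x. a \<le> x \<and> x \<le> b \<and> f x = 0"
  using IVT'[of f a 0 b] assms by auto

lemma lv_pos: "x > 0 \<Longrightarrow> y > 0 \<Longrightarrow> z > 0 \<Longrightarrow> i < 2*s+t \<Longrightarrow> lv s t x y z $ i > 0"
  by (simp add: lv_def)

lemma lambda1_G:
  assumes n: "n \<ge> 4" and \<mu>: "real n \<le> \<mu>" "fG (real n) \<mu> = 0"
  shows "lambda1 (Dm 1 (n-2)) = \<mu>"
proof -
  define x where "x = \<mu> + real n - 1"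
  define y where "y = 1 + 2*\<mu>"
  define z where "z = \<mu>^2 - (real n - 3)*\<mu> - real n + 2"
  have rt: "real (n-2) = real n - 2" using n by (simp add: of_nat_diff)
  have xp: "x > 0" "y > 0" using n \<mu> unfolding x_def y_def by auto
  have "z = \<mu> * (\<mu> - real n + 3) - real n + 2" unfolding z_def by (simp add: algebra_simps power2_eq_square)
  moreover have "\<mu> * (\<mu> - real n + 3) \<ge> \<mu> * 3" using \<mu> n by (intro mult_left_mono) auto
  ultimately have zp: "z > 0" using \<mu> n by linarith
  have eq: "Dm 1 (n-2) *\<^sub>v lv 1 (n-2) x y z = \<mu> \<cdot>\<^sub>v lv 1 (n-2) x y z"
  proof (rule Dm_eig)
    show "\<mu> * x = (real 1 - 1) * x + real (n-2) * y + real 1 * z"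
      unfolding rt x_def y_def z_def by (simp add: algebra_simps power2_eq_square)
    show "\<mu> * y = real 1 * x + (real (n-2) - 1) * y + 2 * real 1 * z"
      unfolding rt x_def y_def z_def by (simp add: algebra_simps power2_eq_square)
    show "\<mu> * z = real 1 * x + 2 * real (n-2) * y + 2 * (real 1 - 1) * z"
      using \<mu>(2) unfolding rt x_def y_def z_def fG_def
      by (simp add: algebra_simps power2_eq_square power3_eq_cube)
  qed
  show ?thesis
    by (rule perron_lambda1[OF Dm_carrier _ lv_carrier _ _ eq])
      (use n xp zp in \<open>auto simp: Dm_nonneg lv_pos\<close>)
qed

lemma exists_G:
  assumes n: "n \<ge> 4" and a: "real n \<le> a" "a \<le> 2 * real n" "fG (real n) a \<le> 0"
  shows "\<exists>\<mu>. a \<le> \<mu> \<and> \<mu> \<le> 2 * real n \<and> fG (real n) \<mu> = 0 \<and> lambda1 (Dm 1 (n-2)) = \<mu>"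
proof -
  have "fG (real n) (2 * real n) = 4 * real n ^ 3 + 2 * real n ^ 2 + 15 * real n + 5"
    unfolding fG_def by (simp add: algebra_simps power2_eq_square power3_eq_cube)
  then have "fG (real n) (2 * real n) \<ge> 0" by simp
  moreover have "continuous_on {a..2 * real n} (fG (real n))"
    unfolding fG_def by (intro continuous_intros)
  ultimately obtain \<mu> where "a \<le> \<mu>" "\<mu> \<le> 2 * real n" "fG (real n) \<mu> = 0"
    using root_between[of a "2 * real n" "fG (real n)"] a by auto
  then show ?thesis using lambda1_G[OF n, of \<mu>] a by auto
qed

lemma eig_H:
  assumes s: "s \<ge> 1" and t: "t \<ge> 1" and \<nu>: "\<nu> \<ge> 0" "gH (real s) (real t) \<nu> = 0"
  shows "eigenvalue (Dm s t) \<nu>"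
proof -
  define a where "a = \<nu> - real s + 1"
  define c where "c = \<nu> - 2 * real s + 2"
  define x where "x = real t * (\<nu> + 2)"
  define y where "y = a * c - real s ^ 2"
  define z where "z = real t * (2 * a + real s)"
  have eq: "Dm s t *\<^sub>v lv s t x y z = \<nu> \<cdot>\<^sub>v lv s t x y z"
  proof (rule Dm_eig)
    show "\<nu> * x = (real s - 1) * x + real t * y + real s * z"
      unfolding x_def y_def z_def a_def c_def by (simp add: algebra_simps power2_eq_square)
    show "\<nu> * y = real s * x + (real t - 1) * y + 2 * real s * z"
      using \<nu>(2) unfolding x_def y_def z_def a_def c_def gH_def
      by (simp add: algebra_simps power2_eq_square)
    show "\<nu> * z = real s * x + 2 * real t * y + 2 * (real s - 1) * z"
      unfolding x_def y_def z_def a_def c_def by (simp add: algebra_simps power2_eq_square)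
  qed
  have "x > 0" unfolding x_def using t \<nu> by auto
  then have "lv s t x y z $ 0 \<noteq> 0" using s by (simp add: lv_def)
  then have "lv s t x y z \<noteq> 0\<^sub>v (2*s+t)" using s by auto
  then show ?thesis unfolding eigenvalue_def eigenvector_def using eq
    by (intro exI[of _ "lv s t x y z"]) (auto simp: Dm_def lv_carrier)
qed

lemma eig_S:
  assumes s: "s \<ge> 1" and \<nu>: "\<nu> > real s - 1" "qS (real s) \<nu> = 0"
  shows "eigenvalue (Dm s 0) \<nu> \<and> lambda1 (Dm s 0) = \<nu>"
proof -
  define x where "x = real s"
  define z where "z = \<nu> - real s + 1"
  have eq: "Dm s 0 *\<^sub>v lv s 0 x 1 z = \<nu> \<cdot>\<^sub>v lv s 0 x 1 z"
  proof (rule Dm_eig)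
    show "\<nu> * x = (real s - 1) * x + real 0 * 1 + real s * z"
      unfolding x_def z_def by (simp add: algebra_simps)
    show "\<nu> * 1 = real s * x + (real 0 - 1) * 1 + 2 * real s * z" if "0 < (0::nat)" using that by simp
    show "\<nu> * z = real s * x + 2 * real 0 * 1 + 2 * (real s - 1) * z"
      using \<nu>(2) unfolding x_def z_def qS_def by (simp add: algebra_simps power2_eq_square)
  qed
  have xp: "x > 0" "z > 0" unfolding x_def z_def using s \<nu> by auto
  have l: "lambda1 (Dm s 0) = \<nu>"
    by (rule perron_lambda1[OF Dm_carrier _ lv_carrier _ _ eq])
      (use s xp in \<open>auto simp: Dm_nonneg lv_pos\<close>)
  have "lv s 0 x 1 z $ 0 \<noteq> 0" using s xp by (simp add: lv_def)
  then have "lv s 0 x 1 z \<noteq> 0\<^sub>v (2*s+0)" using s by auto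
  then have "eigenvalue (Dm s 0) \<nu>" unfolding eigenvalue_def eigenvector_def using eq
    using lv_carrier[of s 0 x 1 z] by (intro exI[of _ "lv s 0 x 1 z"]) (auto simp: Dm_def)
  with l show ?thesis by auto
qed



lemma gH_2n: "gH s t (2*(2*s+t)) = 20*s^3 + 27*s^2*t + 37*s^2 + 16*s*t^2 + 36*s*t + 16*s + 4*t^3 + 10*t^2 + 8*t + 2"
  unfolding gH_def by (simp add: algebra_simps power2_eq_square power3_eq_cube)

lemma bigger_H:
  assumes s: "s \<ge> 1" and t: "t \<ge> 1" and \<mu>: "0 \<le> \<mu>" "\<mu> \<le> 2*(2*real s+real t)"
    and g: "gH (real s) (real t) \<mu> < 0"
  shows "\<mu> < lambda1 (Dm s t)"
proof -
  have "gH (real s) (real t) (2*(2*real s+real t)) \<ge> 0" unfolding gH_2n by simp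
  moreover have "continuous_on {\<mu>..2*(2*real s+real t)} (gH (real s) (real t))"
    unfolding gH_def by (intro continuous_intros)
  ultimately obtain \<nu> where \<nu>: "\<mu> \<le> \<nu>" "gH (real s) (real t) \<nu> = 0"
    using root_between[of \<mu> "2*(2*real s+real t)" "gH (real s) (real t)"] \<mu> g by auto
  have "\<nu> \<noteq> \<mu>" using \<nu> g by auto
  then have "\<mu> < \<nu>" using \<nu> by auto
  also have "\<nu> \<le> lambda1 (Dm s t)"
    by (rule le_lambda1[OF Dm_carrier eig_H[OF s t _ \<nu>(2)]]) (use \<mu> \<nu> in auto)
  finally show ?thesis .
qed

lemma bigger_S:
  assumes s: "s \<ge> 1" and \<mu>: "real s - 1 < \<mu>" "\<mu> \<le> 4*real s"
    and g: "qS (real s) \<mu> < 0"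
  shows "\<mu> < lambda1 (Dm s 0)"
proof -
  have "qS (real s) (4*real s) = 5*real s^2 + 8*real s + 2"
    unfolding qS_def by (simp add: algebra_simps power2_eq_square)
  then have "qS (real s) (4*real s) \<ge> 0" by simp
  moreover have "continuous_on {\<mu>..4*real s} (qS (real s))"
    unfolding qS_def by (intro continuous_intros)
  ultimately obtain \<nu> where \<nu>: "\<mu> \<le> \<nu>" "qS (real s) \<nu> = 0"
    using root_between[of \<mu> "4*real s" "qS (real s)"] \<mu> g by auto
  have "\<nu> \<noteq> \<mu>" using \<nu> g by auto
  then have "\<mu> < \<nu>" using \<nu> by auto
  also have "\<nu> = lambda1 (Dm s 0)"
    using eig_S[OF s _ \<nu>(2)] \<mu> \<nu> by auto
  finally show ?thesis .
qed

definition hh :: "real \<Rightarrow> real \<Rightarrow> real \<Rightarrow> real" where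
  "hh s n m = -(m^2) + m*(5*s+4-2*n) - 2*s^2 + (n+3)*s + 3 - n"

lemma gH_fG: "gH s t m = fG (2*s+t) m + (s-1) * hh s (2*s+t) m"
  unfolding gH_def fG_def hh_def by (simp add: algebra_simps power2_eq_square power3_eq_cube)


lemma case_i:
  assumes s: "s \<ge> 2" and n: "n \<ge> 2*s+2"
  shows "lambda1 (Dm 1 (n-2)) < lambda1 (Dm s (n-2*s))"
proof -
  have n4: "n \<ge> 4" using s n by auto
  have rn: "real n \<ge> 2 * real s + 2" using n by linarith
  have f0: "fG (real n) (real n) \<le> 0"
  proof -
    have "real n * (real n - 3) \<ge> 4 * 1" using n4 by (intro mult_mono) auto
    moreover have "fG (real n) (real n) = 5 - 2 * (real n * (real n - 3))"
      unfolding fG_def by (simp add: algebra_simps power2_eq_square power3_eq_cube)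
    ultimately show ?thesis by linarith
  qed
  obtain \<mu> where \<mu>: "real n \<le> \<mu>" "\<mu> \<le> 2 * real n" "fG (real n) \<mu> = 0" "lambda1 (Dm 1 (n-2)) = \<mu>"
    using exists_G[OF n4 _ _ f0] by auto
  define t where "t = n - 2*s"
  have t1: "t \<ge> 1" and rt: "real t = real n - 2 * real s" using n unfolding t_def by (auto simp: of_nat_diff)
  have rnt: "2 * real s + real t = real n" using rt by simp
  have h: "hh (real s) (real n) \<mu> < 0"
  proof -
    have "hh (real s) (real n) \<mu> = hh (real s) (real n) (real n) - (\<mu> - real n) * (\<mu> + 3*real n - 5*real s - 4)"
      unfolding hh_def by (simp add: algebra_simps power2_eq_square)
    moreover have "(\<mu> - real n) * (\<mu> + 3*real n - 5*real s - 4) \<ge> 0"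
      using \<mu>(1) rn by (intro mult_nonneg_nonneg) auto
    moreover have "hh (real s) (real n) (real n) < 0"
    proof -
      define d where "d = real n - 2 * real s - 2"
      have d: "d \<ge> 0" using rn unfolding d_def by simp
      have "hh (real s) (real n) (real n) = - 2 * real s^2 - 3 * real s - 3 - 6 * real s * d - 9 * d - 3 * d^2"
        unfolding hh_def d_def by (simp add: algebra_simps power2_eq_square)
      also have "\<dots> < 0"
      proof -
        have "real s * d \<ge> 0" "d^2 \<ge> 0" "real s ^ 2 \<ge> 0" using d by auto
        then show ?thesis using d by linarith
      qed
      finally show ?thesis .
    qed
    ultimately show ?thesis by linarith
  qed
  have g: "gH (real s) (real t) \<mu> < 0"
    unfolding gH_fG rnt \<mu>(3) using h s by (simp add: mult_pos_neg)
  have "\<mu> < lambda1 (Dm s t)"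
    by (rule bigger_H[OF _ t1 _ _ g]) (use s \<mu> rnt n4 in auto)
  then show ?thesis using \<mu> unfolding t_def by simp
qed



lemma case_ii:
  assumes s: "s \<ge> 2" and n: "n = 2*s+1"
  shows "lambda1 (Dm 1 (n-2)) < lambda1 (Dm s 1)"
proof -
  have n4: "n \<ge> 4" using s n by auto
  have rn: "real n = 2 * real s + 1" using n by simp
  have f0: "fG (real n) (real n + 1/4) \<le> 0"
  proof -
    have "real n * (7/4 * real n - 51/8) \<ge> 5 * (19/8)" using s rn by (intro mult_mono) auto
    moreover have "fG (real n) (real n + 1/4) = 477/64 - real n * (7/4 * real n - 51/8)"
      unfolding fG_def by (simp add: power2_eq_square power3_eq_cube field_simps)
    ultimately show ?thesis by (simp; linarith)
  qed
  obtain \<mu> where \<mu>: "real n + 1/4 \<le> \<mu>" "\<mu> \<le> 2 * real n" "fG (real n) \<mu> = 0" "lambda1 (Dm 1 (n-2)) = \<mu>"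
    using exists_G[OF n4 _ _ f0] n4 by auto
  have h: "hh (real s) (real n) \<mu> < 0"
  proof -
    have "hh (real s) (real n) \<mu> = 2 * real s + 2 - \<mu> * (\<mu> - real s - 2)"
      unfolding hh_def rn by (simp add: algebra_simps power2_eq_square)
    moreover have "\<mu> * (\<mu> - real s - 2) \<ge> (2 * real s + 5/4) * (real s - 3/4)"
      using \<mu>(1) s rn by (intro mult_mono) auto
    moreover have "real s * (2 * real s - 9/4) \<ge> 2 * (7/4)" using s by (intro mult_mono) auto
    moreover have "(2 * real s + 5/4) * (real s - 3/4) = real s * (2 * real s - 9/4) + 2 * real s - 15/16"
      by (simp add: algebra_simps)
    ultimately show ?thesis by linarith
  qed
  have rnt: "2 * real s + real (1::nat) = real n" using rn by simp
  have g: "gH (real s) (real (1::nat)) \<mu> < 0"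
    unfolding gH_fG rnt \<mu>(3) using h s by (simp add: mult_pos_neg)
  have "\<mu> < lambda1 (Dm s 1)"
    by (rule bigger_H[OF _ _ _ _ g]) (use s \<mu> rnt n4 in auto)
  then show ?thesis using \<mu> by simp
qed

lemma gH0: "gH s 0 m = (m + 1) * qS s m"
  unfolding gH_def qS_def by (simp add: algebra_simps power2_eq_square)

lemma case_iii:
  assumes s: "s \<ge> 5" and n: "n = 2*s"
  shows "lambda1 (Dm 1 (n-2)) < lambda1 (Dm s 0)"
proof -
  have n4: "n \<ge> 4" using s n by auto
  have rn: "real n = 2 * real s" using n by simp
  have f0: "fG (real n) (real n) \<le> 0"
  proof -
    have "real n * (real n - 3) \<ge> 4 * 1" using n4 by (intro mult_mono) auto
    moreover have "fG (real n) (real n) = 5 - 2 * (real n * (real n - 3))"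
      unfolding fG_def by (simp add: algebra_simps power2_eq_square power3_eq_cube)
    ultimately show ?thesis by linarith
  qed
  obtain \<mu> where \<mu>: "real n \<le> \<mu>" "\<mu> \<le> 2 * real n" "fG (real n) \<mu> = 0" "lambda1 (Dm 1 (n-2)) = \<mu>"
    using exists_G[OF n4 _ _ f0] n4 by auto
  have h: "hh (real s) (real n) \<mu> < 0"
  proof -
    have "hh (real s) (real n) \<mu> = real s + 3 - \<mu> * (\<mu> - real s - 4)"
      unfolding hh_def rn by (simp add: algebra_simps power2_eq_square)
    moreover have "\<mu> * (\<mu> - real s - 4) \<ge> (2 * real s) * 1"
      using \<mu>(1) s rn by (intro mult_mono) auto
    ultimately show ?thesis using s by linarith
  qed
  have rnt: "2 * real s + real (0::nat) = real n" using rn by simp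
  have g: "gH (real s) (real (0::nat)) \<mu> < 0"
    unfolding gH_fG rnt \<mu>(3) using h s by (simp add: mult_pos_neg)
  moreover have "gH (real s) (real (0::nat)) \<mu> = (\<mu> + 1) * qS (real s) \<mu>" using gH0 by simp
  moreover have "\<mu> + 1 > 0" using \<mu>(1) by simp
  ultimately have qn: "qS (real s) \<mu> < 0" by (auto simp: mult_less_0_iff)
  have "\<mu> < lambda1 (Dm s 0)"
    using bigger_S[of s \<mu>] qn s \<mu> rn by auto
  then show ?thesis using \<mu> by simp
qed

lemma case_iv_gen:
  assumes s: "s \<ge> 2" and n: "n = 2*s" and c: "real n \<le> c" "c \<le> 2 * real n"
    "fG (real n) c \<le> 0" "qS (real s) c > 0"
  shows "lambda1 (Dm s 0) < lambda1 (Dm 1 (n-2))"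
proof -
  have n4: "n \<ge> 4" using s n by auto
  obtain \<mu> where \<mu>: "c \<le> \<mu>" "lambda1 (Dm 1 (n-2)) = \<mu>"
    using exists_G[OF n4 c(1,2,3)] by auto
  have q0: "qS (real s) (real s) \<le> 0"
  proof -
    have "real s * real s \<ge> 0" "real s \<ge> 2" using s by auto
    moreover have "qS (real s) (real s) = (2 - real s) - real s * real s"
      by (simp add: qS_def power2_eq_square algebra_simps)
    ultimately show ?thesis by linarith
  qed
  have cs: "real s \<le> c" using c n by simp
  have "continuous_on {real s..c} (qS (real s))" unfolding qS_def by (intro continuous_intros)
  then obtain \<nu> where \<nu>: "real s \<le> \<nu>" "\<nu> \<le> c" "qS (real s) \<nu> = 0"
    using root_between[of "real s" c "qS (real s)"] cs q0 c(4) by auto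
  have "lambda1 (Dm s 0) = \<nu>" using eig_S[of s \<nu>] s \<nu> by auto
  moreover have "\<nu> \<noteq> c" using \<nu> c(4) by auto
  ultimately show ?thesis using \<nu> \<mu> by auto
qed

lemma case_iv:
  assumes "n = 2*s" "n \<in> {4,6,8}"
  shows "lambda1 (Dm s 0) < lambda1 (Dm 1 (n-2))"
proof -
  consider "n = 4" "s = 2" | "n = 6" "s = 3" | "n = 8" "s = 4" using assms by auto
  then show ?thesis
  proof cases
    case 1 then show ?thesis
      by (intro case_iv_gen[where c = 4]) (auto simp: fG_def qS_def power2_eq_square power3_eq_cube)
  next
    case 2 then show ?thesis
      by (intro case_iv_gen[where c = "25/4"]) (auto simp: fG_def qS_def power2_eq_square power3_eq_cube)
  next
    case 3 then show ?thesis
      by (intro case_iv_gen[where c = "351/40"]) (auto simp: fG_def qS_def power2_eq_square power3_eq_cube)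
  qed
qed


theorem lemma2p8:
  fixes s n :: nat
  assumes "s \<ge> 1" and "n \<ge> 2 * s"
  shows "(n \<ge> 2 * s + 2 \<longrightarrow>
            lambda1 (dist_matrix (Gstar n))
              \<le> lambda1 (dist_matrix (gjoin (complete s) (gunion (complete (n - 2 * s)) (edgeless s))))
          \<and> (lambda1 (dist_matrix (Gstar n))
              = lambda1 (dist_matrix (gjoin (complete s) (gunion (complete (n - 2 * s)) (edgeless s))))
             \<longleftrightarrow> s = 1))
       \<and> (n = 2 * s + 1 \<longrightarrow>
            lambda1 (dist_matrix (Gstar n)) \<le> lambda1 (dist_matrix (S n ((n - 1) div 2)))
          \<and> (lambda1 (dist_matrix (Gstar n)) = lambda1 (dist_matrix (S n ((n - 1) div 2)))
             \<longleftrightarrow> n = 3))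
       \<and> (n = 2 * s \<and> n \<ge> 10 \<longrightarrow>
            lambda1 (dist_matrix (Gstar n)) < lambda1 (dist_matrix (S n (n div 2))))
       \<and> (n = 2 * s \<and> 2 \<le> n \<and> n \<le> 8 \<longrightarrow>
            lambda1 (dist_matrix (S n (n div 2))) \<le> lambda1 (dist_matrix (Gstar n))
          \<and> (lambda1 (dist_matrix (S n (n div 2))) = lambda1 (dist_matrix (Gstar n))
             \<longleftrightarrow> n = 2))"
proof (intro conjI impI)
  have s1: "s \<ge> 1" and n2: "n \<ge> 2" using assms by auto
  have G: "dist_matrix (Gstar n) = Dm 1 (n-2)" using dm_Gstar[OF n2] .
  have H: "dist_matrix (gjoin (complete s) (gunion (complete (n - 2 * s)) (edgeless s))) = Dm s (n - 2*s)"
    using dm_H[OF s1] .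
  {
    assume n: "n \<ge> 2 * s + 2"
    show "lambda1 (dist_matrix (Gstar n))
              \<le> lambda1 (dist_matrix (gjoin (complete s) (gunion (complete (n - 2 * s)) (edgeless s))))"
    proof (cases "s = 1")
      case True then show ?thesis unfolding G H by simp
    next
      case False then show ?thesis unfolding G H using case_i[of s n] n s1 by simp
    qed
    show "lambda1 (dist_matrix (Gstar n))
              = lambda1 (dist_matrix (gjoin (complete s) (gunion (complete (n - 2 * s)) (edgeless s))))
             \<longleftrightarrow> s = 1"
    proof (cases "s = 1")
      case True then show ?thesis unfolding G H by simp
    next
      case False then show ?thesis unfolding G H using case_i[of s n] n s1 by simp
    qed
  }
  {
    assume n: "n = 2 * s + 1"
    have d: "(n - 1) div 2 = s" using n by simp
    have S: "dist_matrix (S n ((n - 1) div 2)) = Dm s 1" unfolding d using n dm_S1[OF s1] by simp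
    have G': "dist_matrix (Gstar n) = Dm 1 (n-2)" by (fact G)
    show "lambda1 (dist_matrix (Gstar n)) \<le> lambda1 (dist_matrix (S n ((n - 1) div 2)))"
    proof (cases "s = 1")
      case True then show ?thesis unfolding G' S using n by simp
    next
      case False then show ?thesis unfolding G' S using case_ii[of s n] n s1 by simp
    qed
    show "lambda1 (dist_matrix (Gstar n)) = lambda1 (dist_matrix (S n ((n - 1) div 2))) \<longleftrightarrow> n = 3"
    proof (cases "s = 1")
      case True then show ?thesis unfolding G' S using n by simp
    next
      case False then show ?thesis unfolding G' S using case_ii[of s n] n s1 by simp
    qed
  }
  {
    assume n: "n = 2 * s \<and> n \<ge> 10"
    have d: "n div 2 = s" using n by simp
    have S: "dist_matrix (S n (n div 2)) = Dm s 0" unfolding d using n dm_S0[OF s1] by simp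
    show "lambda1 (dist_matrix (Gstar n)) < lambda1 (dist_matrix (S n (n div 2)))"
      unfolding G S using case_iii[of s n] n by simp
  }
  {
    assume n: "n = 2 * s \<and> 2 \<le> n \<and> n \<le> 8"
    have d: "n div 2 = s" using n by simp
    have S: "dist_matrix (S n (n div 2)) = Dm s 0" unfolding d using n dm_S0[OF s1] by simp
    have c: "n = 2 \<or> n \<in> {4,6,8}" using n by auto
    show "lambda1 (dist_matrix (S n (n div 2))) \<le> lambda1 (dist_matrix (Gstar n))"
      using c
    proof
      assume "n = 2" then have "s = 1" using n by simp
      then show ?thesis unfolding G S using \<open>n = 2\<close> by simp
    next
      assume "n \<in> {4,6,8}" then show ?thesis unfolding G S using case_iv[of n s] n by simp
    qed
    show "lambda1 (dist_matrix (S n (n div 2))) = lambda1 (dist_matrix (Gstar n)) \<longleftrightarrow> n = 2"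
      using c
    proof
      assume "n = 2" then have "s = 1" using n by simp
      then show ?thesis unfolding G S using \<open>n = 2\<close> by simp
    next
      assume "n \<in> {4,6,8}" then show ?thesis unfolding G S using case_iv[of n s] n by auto
    qed
  }
qed

end
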